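(* Let $A_1\le A_2$ and $B_1\le B_2$ be groups with $[A_2:A_1]<\infty$, $[B_2:B_1]<\infty$, $A_1\trianglelefteq B_1$, $A_2\trianglelefteq B_2$, and $A_1=B_1\cap A_2$. Let $\varphi:B_1\to B_2$ be a homomorphism with $\varphi(A_1)\subseteq A_2$. Let $\varphi'=\varphi|_{A_1}:A_1\to A_2$, and let $\bar\varphi:B_1A_2/A_2\to B_2/A_2$, $bA_2\mapsto\varphi(b)A_2$, be the induced map (using $B_1/A_1\cong B_1A_2/A_2$). Then: (1) if $R(\bar\varphi)=\infty$, then $R(\varphi)=\infty$; (2) if $R(\bar\varphi)<\infty$, $|\mathrm{Fix}(\bar\varphi)|<\infty$ and $R(\varphi')=\infty$, then $R(\varphi)=\infty$; (3) if $A_2\le Z(B_2)$, then $R(\varphi)\le R(\bar\varphi)R(\varphi')$ (with the product defined to be $\infty$ if either factor is $\infty$).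
   Context: For a group $K$, a finite-index subgroup $L\le K$ and a homomorphism $\phi:L\to K$, $R(\phi)\in\mathbb Z_{>0}\cup\{\infty\}$ is the number of classes of the relation $\alpha\sim_\phi\beta\iff\exists\gamma\in L:\ \alpha=\gamma\beta\phi(\gamma^{-1})$ on $K$. $\mathrm{Fix}(\bar\varphi)=\{x\in B_1A_2/A_2:\bar\varphi(x)=x\}$. *)

theory Defs
  imports "HOL-Algebra.Algebra" "HOL-Library.Extended_Nat"
begin

definition twisted_rel :: "('a, 'b) monoid_scheme \<Rightarrow> 'a set \<Rightarrow> ('a \<Rightarrow> 'a) \<Rightarrow> ('a \<times> 'a) set" where
  "twisted_rel K L \<phi> = {(\<alpha>, \<beta>). \<alpha> \<in> carrier K \<and> \<beta> \<in> carrier K \<and>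
      (\<exists>\<gamma>\<in>L. \<alpha> = \<gamma> \<otimes>\<^bsub>K\<^esub> \<beta> \<otimes>\<^bsub>K\<^esub> \<phi> (inv\<^bsub>K\<^esub> \<gamma>))}"

definition reidemeister :: "('a, 'b) monoid_scheme \<Rightarrow> 'a set \<Rightarrow> ('a \<Rightarrow> 'a) \<Rightarrow> enat" where
  "reidemeister K L \<phi> =
     (if finite (carrier K // twisted_rel K L \<phi>) then enat (card (carrier K // twisted_rel K L \<phi>)) else \<infinity>)"

text \<open>The induced map bA_2 \<mapsto> phi(b)A_2 on B_1A_2/A_2 (well defined under the hypotheses).\<close>
definition induced_map :: "('a, 'b) monoid_scheme \<Rightarrow> 'a set \<Rightarrow> 'a set \<Rightarrow> ('a \<Rightarrow> 'a) \<Rightarrow> 'a set \<Rightarrow> 'a set" where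
  "induced_map Gr B1 A2 \<phi> S = r_coset Gr A2 (\<phi> (SOME b. b \<in> B1 \<and> S = r_coset Gr A2 b))"

end

theory Submission
  imports Defs
begin

lemma twisted_equiv:
  assumes grp: "group K" and L: "subgroup L K"
    and fc: "\<And>x. x\<in>L \<Longrightarrow> f x \<in> carrier K"
    and fm: "\<And>x y. x\<in>L \<Longrightarrow> y\<in>L \<Longrightarrow> f (x \<otimes>\<^bsub>K\<^esub> y) = f x \<otimes>\<^bsub>K\<^esub> f y"
  shows "equiv (carrier K) (twisted_rel K L f)"
proof -
  interpret K: group K by (rule grp)
  have Lc: "\<And>x. x \<in> L \<Longrightarrow> x \<in> carrier K" by (rule subgroup.mem_carrier[OF L])
  have Lone: "\<one>\<^bsub>K\<^esub> \<in> L" by (rule subgroup.one_closed[OF L])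
  have Linv: "\<And>x. x \<in> L \<Longrightarrow> inv\<^bsub>K\<^esub> x \<in> L" by (rule subgroup.m_inv_closed[OF L])
  have Lm: "\<And>x y. x \<in> L \<Longrightarrow> y \<in> L \<Longrightarrow> x \<otimes>\<^bsub>K\<^esub> y \<in> L" by (rule subgroup.m_closed[OF L])
  have f1: "f \<one>\<^bsub>K\<^esub> = \<one>\<^bsub>K\<^esub>"
  proof -
    have "f \<one>\<^bsub>K\<^esub> = f \<one>\<^bsub>K\<^esub> \<otimes>\<^bsub>K\<^esub> f \<one>\<^bsub>K\<^esub>"
      using fm[OF Lone Lone] by (simp only: K.l_one[OF K.one_closed])
    then show ?thesis using K.l_cancel_one' fc[OF Lone] by blast
  qed
  have finv: "\<And>x. x \<in> L \<Longrightarrow> f (inv\<^bsub>K\<^esub> x) = inv\<^bsub>K\<^esub> f x"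
  proof -
    fix x assume x: "x \<in> L"
    have e1: "f (inv\<^bsub>K\<^esub> x) \<otimes>\<^bsub>K\<^esub> f x = \<one>\<^bsub>K\<^esub>"
      using fm[OF Linv[OF x] x, symmetric] K.l_inv[OF Lc[OF x]] f1 by simp
    then show "f (inv\<^bsub>K\<^esub> x) = inv\<^bsub>K\<^esub> f x"
      using K.inv_equality[OF e1 fc[OF x] fc[OF Linv[OF x]]] by simp
  qed
  show ?thesis
  proof (rule equivI)
    show "twisted_rel K L f \<subseteq> carrier K \<times> carrier K" unfolding twisted_rel_def by auto
    show "refl_on (carrier K) (twisted_rel K L f)"
    proof (rule refl_onI)
      fix x assume x: "x \<in> carrier K"
      have "x = \<one>\<^bsub>K\<^esub> \<otimes>\<^bsub>K\<^esub> x \<otimes>\<^bsub>K\<^esub> f (inv\<^bsub>K\<^esub> \<one>\<^bsub>K\<^esub>)"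
        using x f1 by simp
      then show "(x, x) \<in> twisted_rel K L f" unfolding twisted_rel_def using x Lone by blast
    qed
    show "sym (twisted_rel K L f)"
    proof (rule symI)
      fix a b assume "(a, b) \<in> twisted_rel K L f"
      then obtain g where a: "a \<in> carrier K" "b \<in> carrier K" "g \<in> L"
        and e: "a = g \<otimes>\<^bsub>K\<^esub> b \<otimes>\<^bsub>K\<^esub> f (inv\<^bsub>K\<^esub> g)"
        unfolding twisted_rel_def by auto
      have "b = inv\<^bsub>K\<^esub> g \<otimes>\<^bsub>K\<^esub> a \<otimes>\<^bsub>K\<^esub> f (inv\<^bsub>K\<^esub> (inv\<^bsub>K\<^esub> g))"
        using a Lc[OF a(3)] fc[OF a(3)] unfolding e finv[OF a(3)]
        by (simp add: K.m_assoc K.inv_solve_left)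
      then show "(b, a) \<in> twisted_rel K L f"
        unfolding twisted_rel_def using a Linv[OF a(3)] by blast
    qed
    show "trans (twisted_rel K L f)"
    proof (rule transI)
      fix a b c assume "(a, b) \<in> twisted_rel K L f" "(b, c) \<in> twisted_rel K L f"
      then obtain g h where a: "a \<in> carrier K" "b \<in> carrier K" "c \<in> carrier K" "g \<in> L" "h \<in> L"
        and e: "a = g \<otimes>\<^bsub>K\<^esub> b \<otimes>\<^bsub>K\<^esub> f (inv\<^bsub>K\<^esub> g)"
        and e2: "b = h \<otimes>\<^bsub>K\<^esub> c \<otimes>\<^bsub>K\<^esub> f (inv\<^bsub>K\<^esub> h)"
        unfolding twisted_rel_def by auto
      have "a = (g \<otimes>\<^bsub>K\<^esub> h) \<otimes>\<^bsub>K\<^esub> c \<otimes>\<^bsub>K\<^esub> f (inv\<^bsub>K\<^esub> (g \<otimes>\<^bsub>K\<^esub> h))"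
        using a Lc[OF a(4)] Lc[OF a(5)] fc[OF a(4)] fc[OF a(5)] unfolding e e2
        by (simp add: K.m_assoc K.inv_mult_group finv fm Linv a(4,5) K.inv_solve_left)
      then show "(a, c) \<in> twisted_rel K L f"
        unfolding twisted_rel_def using a Lm[OF a(4,5)] by blast
    qed
  qed
qed

lemma (in group) inv_cancel_l':
  "x \<in> carrier G \<Longrightarrow> y \<in> carrier G \<Longrightarrow> inv x \<otimes> (x \<otimes> y) = y"
  by (simp add: m_assoc[symmetric])

lemma (in group) inv_cancel_l'':
  "x \<in> carrier G \<Longrightarrow> y \<in> carrier G \<Longrightarrow> x \<otimes> (inv x \<otimes> y) = y"
  by (simp add: m_assoc[symmetric])

lemma reid_nonzero:
  assumes "carrier K \<noteq> {}"
  shows "reidemeister K L f \<noteq> 0"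
  using assms unfolding reidemeister_def
  by (auto simp: zero_enat_def card_eq_0_iff)

lemma main_aux:
  fixes G (structure) and A1 A2 B1 :: "'a set" and \<phi> :: "'a \<Rightarrow> 'a"
  assumes grp: "group G"
    and A2B2: "A2 \<lhd> G"
    and B1sub: "subgroup B1 G"
    and A1sub: "subgroup A1 G"
    and A1A2: "A1 \<subseteq> A2"
    and A1B1: "A1 \<lhd> G\<lparr>carrier := B1\<rparr>"
    and A1eq: "A1 = B1 \<inter> A2"
    and idxA: "finite {A1 #>\<^bsub>G\<^esub> a | a. a \<in> A2}"
    and idxB: "finite {B1 #>\<^bsub>G\<^esub> b | b. b \<in> carrier G}"
    and hom: "\<phi> \<in> hom (G\<lparr>carrier := B1\<rparr>) G"
    and phiA: "\<phi> ` A1 \<subseteq> A2"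
  defines "Q \<equiv> {A2 #>\<^bsub>G\<^esub> b | b. b \<in> B1}"
    and "\<phi>bar \<equiv> induced_map G B1 A2 \<phi>"
  shows "(reidemeister (G Mod A2) Q \<phi>bar = \<infinity> \<longrightarrow> reidemeister G B1 \<phi> = \<infinity>)
       \<and> ((reidemeister (G Mod A2) Q \<phi>bar < \<infinity> \<and> finite {x \<in> Q. \<phi>bar x = x}
            \<and> reidemeister (G\<lparr>carrier := A2\<rparr>) A1 \<phi> = \<infinity>) \<longrightarrow> reidemeister G B1 \<phi> = \<infinity>)
       \<and> ((\<forall>a\<in>A2. \<forall>x\<in>carrier G. a \<otimes>\<^bsub>G\<^esub> x = x \<otimes>\<^bsub>G\<^esub> a) \<longrightarrow>
            reidemeister G B1 \<phi> \<le> reidemeister (G Mod A2) Q \<phi>bar * reidemeister (G\<lparr>carrier := A2\<rparr>) A1 \<phi>)"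
proof -
  interpret G: group G by (rule grp)
  interpret N: normal A2 G by (rule A2B2)
  define p where "p = (\<lambda>g. A2 #>\<^bsub>G\<^esub> g)"
  define E where "E = twisted_rel G B1 \<phi>"
  define Eb where "Eb = twisted_rel (G Mod A2) Q \<phi>bar"
  define E' where "E' = twisted_rel (G\<lparr>carrier := A2\<rparr>) A1 \<phi>"
  have B1c: "\<And>x. x \<in> B1 \<Longrightarrow> x \<in> carrier G" by (rule subgroup.mem_carrier[OF B1sub])
  have A2c: "\<And>x. x \<in> A2 \<Longrightarrow> x \<in> carrier G" by (rule N.mem_carrier)
  have A1B: "\<And>x. x \<in> A1 \<Longrightarrow> x \<in> B1" and A1A: "\<And>x. x \<in> A1 \<Longrightarrow> x \<in> A2" using A1eq by auto
  have B1inv: "\<And>x. x \<in> B1 \<Longrightarrow> inv x \<in> B1" by (rule subgroup.m_inv_closed[OF B1sub])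
  have B1m: "\<And>x y. x \<in> B1 \<Longrightarrow> y \<in> B1 \<Longrightarrow> x \<otimes> y \<in> B1" by (rule subgroup.m_closed[OF B1sub])
  have phic: "\<And>x. x \<in> B1 \<Longrightarrow> \<phi> x \<in> carrier G" using hom unfolding hom_def by auto
  have phim: "\<And>x y. x \<in> B1 \<Longrightarrow> y \<in> B1 \<Longrightarrow> \<phi> (x \<otimes> y) = \<phi> x \<otimes> \<phi> y"
    using hom unfolding hom_def by auto
  have phi1: "\<phi> \<one> = \<one>"
  proof -
    have o: "\<one> \<in> B1" by (rule subgroup.one_closed[OF B1sub])
    have "\<phi> \<one> = \<phi> \<one> \<otimes> \<phi> \<one>"
      using phim[OF o o] by (simp only: G.l_one[OF G.one_closed])
    then show ?thesis using G.l_cancel_one' phic[OF o] by blast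
  qed
  have phinv: "\<And>x. x \<in> B1 \<Longrightarrow> \<phi> (inv x) = inv (\<phi> x)"
  proof -
    fix x assume x: "x \<in> B1"
    have e1: "\<phi> (inv x) \<otimes> \<phi> x = \<one>"
      using phim[OF B1inv[OF x] x, symmetric] G.l_inv[OF B1c[OF x]] phi1 by simp
    then show "\<phi> (inv x) = inv (\<phi> x)"
      using G.inv_equality[OF e1 phic[OF x] phic[OF B1inv[OF x]]] by simp
  qed
  have eqE: "equiv (carrier G) E" unfolding E_def
    by (rule twisted_equiv[OF grp B1sub phic phim])
  have grpA2: "group (G\<lparr>carrier := A2\<rparr>)" by (rule G.subgroup_imp_group[OF N.subgroup_axioms])
  have eqE': "equiv A2 E'" unfolding E'_def
    using twisted_equiv[OF grpA2 G.subgroup_incl[OF A1sub N.subgroup_axioms A1A2], of \<phi>]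
    using phiA A1B phim by auto
  have pcar: "\<And>g. g \<in> carrier G \<Longrightarrow> p g \<in> carrier (G Mod A2)"
    unfolding p_def FactGroup_def by (simp add: G.rcosetsI N.subset)
  have WD: "\<And>b b'. b \<in> B1 \<Longrightarrow> b' \<in> B1 \<Longrightarrow> p b = p b' \<Longrightarrow> p (\<phi> b) = p (\<phi> b')"
  proof -
    fix b b' assume b: "b \<in> B1" "b' \<in> B1" "p b = p b'"
    have "b \<in> p b'" using b G.rcos_self[OF B1c N.subgroup_axioms] unfolding p_def by metis
    then obtain h where h: "h \<in> A2" "b = h \<otimes> b'" unfolding p_def r_coset_def by auto
    have hB: "h \<in> B1"
    proof -
      have "h = b \<otimes> inv b'" using h b B1c A2c by (simp add: G.m_assoc)
      then show ?thesis using B1m B1inv b by simp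
    qed
    then have hA1: "h \<in> A1" using A1eq h by auto
    have "p (\<phi> b) = p (\<phi> h \<otimes> \<phi> b')" using h hB b phim by simp
    also have "\<dots> = (A2 #> \<phi> h) #> \<phi> b'" unfolding p_def
      using G.coset_mult_assoc[OF N.subset] phic hB b by simp
    also have "\<dots> = p (\<phi> b')" unfolding p_def
      using N.rcos_const[OF grp] phiA hA1 by auto
    finally show "p (\<phi> b) = p (\<phi> b')" .
  qed
  have phibar: "\<And>b. b \<in> B1 \<Longrightarrow> \<phi>bar (p b) = p (\<phi> b)"
  proof -
    fix b assume b: "b \<in> B1"
    define b' where "b' = (SOME b'. b' \<in> B1 \<and> p b = A2 #> b')"
    have "b' \<in> B1 \<and> p b = A2 #> b'" unfolding b'_def
      by (rule someI[of _ b]) (simp add: b p_def)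
    then have "p (\<phi> b') = p (\<phi> b)" using WD b unfolding p_def by metis
    then show "\<phi>bar (p b) = p (\<phi> b)"
      unfolding \<phi>bar_def induced_map_def b'_def[symmetric] by (simp add: p_def)
  qed
  have Qp: "Q = p ` B1" unfolding Q_def p_def by auto
  have pinv: "\<And>g. g \<in> carrier G \<Longrightarrow> inv\<^bsub>G Mod A2\<^esub> (p g) = p (inv g)"
    using pcar N.inv_FactGroup N.rcos_inv unfolding p_def by simp
  have pmul: "\<And>x y. x \<in> carrier G \<Longrightarrow> y \<in> carrier G \<Longrightarrow> p x <#> p y = p (x \<otimes> y)"
    unfolding p_def by (simp add: N.rcos_sum)
  have Qsub: "subgroup Q (G Mod A2)"
  proof -
    interpret h: group_hom G "G Mod A2" p
      unfolding p_def
      by (intro group_hom.intro group_hom_axioms.intro grp N.factorgroup_is_group N.r_coset_hom_Mod)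
    show ?thesis unfolding Qp by (rule h.subgroup_img_is_subgroup[OF B1sub])
  qed
  have eqEb: "equiv (carrier (G Mod A2)) Eb" unfolding Eb_def
  proof (rule twisted_equiv[OF N.factorgroup_is_group Qsub])
    fix S assume "S \<in> Q"
    then obtain x where x: "x \<in> B1" "S = p x" unfolding Qp by auto
    show "\<phi>bar S \<in> carrier (G Mod A2)" using x phibar pcar phic by simp
  next
    fix S T assume "S \<in> Q" "T \<in> Q"
    then obtain x y where x: "x \<in> B1" "S = p x" "y \<in> B1" "T = p y" unfolding Qp by auto
    show "\<phi>bar (S \<otimes>\<^bsub>G Mod A2\<^esub> T) = \<phi>bar S \<otimes>\<^bsub>G Mod A2\<^esub> \<phi>bar T"
      using x by (simp add: pmul B1c phibar B1m phim phic)
  qed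
  have KL: "\<And>\<gamma> g. \<gamma> \<in> B1 \<Longrightarrow> g \<in> carrier G \<Longrightarrow>
     p \<gamma> \<otimes>\<^bsub>G Mod A2\<^esub> p g \<otimes>\<^bsub>G Mod A2\<^esub> \<phi>bar (inv\<^bsub>G Mod A2\<^esub> (p \<gamma>)) = p (\<gamma> \<otimes> g \<otimes> \<phi> (inv \<gamma>))"
    by (simp add: pinv B1c phibar B1inv pmul phic)
  have P1: "\<And>a b. (a, b) \<in> E \<Longrightarrow> (p a, p b) \<in> Eb"
  proof -
    fix a b assume "(a, b) \<in> E"
    then obtain \<gamma> where g: "a \<in> carrier G" "b \<in> carrier G" "\<gamma> \<in> B1" "a = \<gamma> \<otimes> b \<otimes> \<phi> (inv \<gamma>)"
      unfolding E_def twisted_rel_def by auto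
    show "(p a, p b) \<in> Eb" unfolding Eb_def twisted_rel_def
      using g KL[of \<gamma> b] pcar Qp by auto
  qed
  have trE: "trans E" and symE: "sym E" using eqE by (simp_all add: equiv_def)
  have trEb: "trans Eb" and symEb: "sym Eb" using eqEb by (simp_all add: equiv_def)
  have RE: "reidemeister G B1 \<phi> = \<infinity> \<longleftrightarrow> infinite (carrier G // E)"
    unfolding reidemeister_def E_def by simp
  have REb: "reidemeister (G Mod A2) Q \<phi>bar = \<infinity> \<longleftrightarrow> infinite (carrier (G Mod A2) // Eb)"
    unfolding reidemeister_def Eb_def by simp
  have RE': "reidemeister (G\<lparr>carrier := A2\<rparr>) A1 \<phi> = \<infinity> \<longleftrightarrow> infinite (A2 // E')"
    unfolding reidemeister_def E'_def by simp
  have part1: "infinite (carrier (G Mod A2) // Eb) \<Longrightarrow> infinite (carrier G // E)"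
  proof
    assume inf: "infinite (carrier (G Mod A2) // Eb)" and fin: "finite (carrier G // E)"
    have "carrier (G Mod A2) // Eb \<subseteq> (\<lambda>C. Eb `` (p ` C)) ` (carrier G // E)"
    proof
      fix D assume "D \<in> carrier (G Mod A2) // Eb"
      then obtain S where S: "S \<in> carrier (G Mod A2)" "D = Eb `` {S}" by (auto elim: quotientE)
      then obtain g where g: "g \<in> carrier G" "S = p g"
        unfolding FactGroup_def RCOSETS_def p_def by auto
      have "Eb `` (p ` (E `` {g})) = D"
      proof
        show "Eb `` (p ` (E `` {g})) \<subseteq> D"
        proof
          fix y assume "y \<in> Eb `` (p ` (E `` {g}))"
          then obtain h where h: "(g, h) \<in> E" "(p h, y) \<in> Eb" by auto
          then have "(p g, p h) \<in> Eb" using P1 by auto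
          then have "(p g, y) \<in> Eb" by (rule transD[OF trEb _ h(2)])
          then show "y \<in> D" using S g by simp
        qed
        show "D \<subseteq> Eb `` (p ` (E `` {g}))"
        proof
          fix y assume "y \<in> D"
          then have "(p g, y) \<in> Eb" using S g by simp
          moreover have "g \<in> E `` {g}" by (rule equiv_class_self[OF eqE g(1)])
          ultimately show "y \<in> Eb `` (p ` (E `` {g}))" by blast
        qed
      qed
      moreover have "E `` {g} \<in> carrier G // E" using g(1) by (rule quotientI)
      ultimately show "D \<in> (\<lambda>C. Eb `` (p ` C)) ` (carrier G // E)" by (metis image_eqI)
    qed
    then have "finite (carrier (G Mod A2) // Eb)" using fin finite_subset by blast
    then show False using inf by simp
  qed
  have part2: "finite {S \<in> Q. \<phi>bar S = S} \<Longrightarrow> infinite (A2 // E') \<Longrightarrow> infinite (carrier G // E)"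
  proof
    define Fx where "Fx = {S \<in> Q. \<phi>bar S = S}"
    assume finF: "finite {S \<in> Q. \<phi>bar S = S}" and inf: "infinite (A2 // E')"
      and fin: "finite (carrier G // E)"
    have "\<forall>S\<in>Fx. \<exists>\<gamma>. \<gamma> \<in> B1 \<and> S = p \<gamma>" unfolding Fx_def Qp by auto
    then obtain gam where gam: "\<And>S. S \<in> Fx \<Longrightarrow> gam S \<in> B1 \<and> S = p (gam S)" by metis
    define \<tau> where "\<tau> S x = gam S \<otimes> x \<otimes> \<phi> (inv (gam S))" for S x
    have C2: "\<And>a a'. a \<in> A2 \<Longrightarrow> a' \<in> A2 \<Longrightarrow> (a, a') \<in> E \<Longrightarrow> \<exists>S\<in>Fx. (a, \<tau> S a') \<in> E'"
    proof -
      fix a a' assume a: "a \<in> A2" "a' \<in> A2" "(a, a') \<in> E"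
      then obtain \<gamma> where g: "\<gamma> \<in> B1" "a = \<gamma> \<otimes> a' \<otimes> \<phi> (inv \<gamma>)"
        unfolding E_def twisted_rel_def by auto
      have gc: "\<gamma> \<in> carrier G" using B1c g(1) .
      have a'c: "a' \<in> carrier G" using A2c a(2) .
      have phc: "\<phi> (inv \<gamma>) \<in> carrier G" using phic B1inv g(1) by blast
      have u: "\<gamma> \<otimes> a' \<otimes> inv \<gamma> \<in> A2" by (rule N.inv_op_closed2[OF gc a(2)])
      have uc: "\<gamma> \<otimes> a' \<otimes> inv \<gamma> \<in> carrier G" using A2c u .
      have wc: "\<gamma> \<otimes> \<phi> (inv \<gamma>) \<in> carrier G" using gc phc by simp
      have aw: "a = (\<gamma> \<otimes> a' \<otimes> inv \<gamma>) \<otimes> (\<gamma> \<otimes> \<phi> (inv \<gamma>))"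
        using g(2) gc a'c phc by (simp add: G.m_assoc G.inv_cancel_l')
      have "inv (\<gamma> \<otimes> a' \<otimes> inv \<gamma>) \<otimes> a
          = inv (\<gamma> \<otimes> a' \<otimes> inv \<gamma>) \<otimes> ((\<gamma> \<otimes> a' \<otimes> inv \<gamma>) \<otimes> (\<gamma> \<otimes> \<phi> (inv \<gamma>)))"
        using aw by simp
      also have "\<dots> = \<gamma> \<otimes> \<phi> (inv \<gamma>)" by (rule G.inv_cancel_l'[OF uc wc])
      finally have w: "\<gamma> \<otimes> \<phi> (inv \<gamma>) \<in> A2"
        using N.m_closed[OF N.m_inv_closed[OF u] a(1)] by simp
      have "\<gamma> = (\<gamma> \<otimes> \<phi> (inv \<gamma>)) \<otimes> \<phi> \<gamma>"
        using gc phic[OF g(1)] by (simp add: phinv[OF g(1)] G.m_assoc)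
      then have "p \<gamma> = (A2 #> (\<gamma> \<otimes> \<phi> (inv \<gamma>))) #> \<phi> \<gamma>"
        unfolding p_def using G.coset_mult_assoc[OF N.subset wc phic[OF g(1)]] by simp
      also have "\<dots> = p (\<phi> \<gamma>)" unfolding p_def using N.rcos_const[OF grp w] by simp
      finally have pg: "p \<gamma> = p (\<phi> \<gamma>)" .
      define S where "S = p \<gamma>"
      have SF1: "p \<gamma> \<in> p ` B1" using g(1) by (rule imageI)
      have SF2: "\<phi>bar (p \<gamma>) = p \<gamma>" using phibar[OF g(1)] pg by simp
      have SF: "S \<in> Fx" unfolding Fx_def S_def Qp using SF1 SF2 by blast
      then have gS: "gam S \<in> B1" "p \<gamma> = p (gam S)" using gam S_def by auto
      have gSc: "gam S \<in> carrier G" using B1c gS(1) .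
      have "\<gamma> \<in> p (gam S)" using G.rcos_self[OF gc N.subgroup_axioms] gS(2) unfolding p_def by simp
      then obtain h where h: "h \<in> A2" "\<gamma> = h \<otimes> gam S" unfolding p_def r_coset_def by auto
      have hc: "h \<in> carrier G" using A2c h(1) .
      have "h = \<gamma> \<otimes> inv (gam S)" using h hc gSc by (simp add: G.m_assoc)
      then have "h \<in> B1" using B1m B1inv g(1) gS(1) by simp
      then have hA1: "h \<in> A1" using A1eq h(1) by auto
      have hB: "h \<in> B1" using A1B hA1 .
      have ph: "\<phi> (inv h) \<in> A2" using phiA A1sub hA1 subgroup.m_inv_closed[OF A1sub hA1] by blast
      have phc2: "\<phi> (inv h) \<in> carrier G" using A2c ph .
      have tc: "\<tau> S a' \<in> carrier G" unfolding \<tau>_def using gSc a'c phic B1inv gS(1) by simp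
      have ae: "a = h \<otimes> \<tau> S a' \<otimes> \<phi> (inv h)"
        unfolding \<tau>_def g(2) h(2)
        using hc gSc a'c hB gS(1) phic B1inv
        by (simp add: G.inv_mult_group phim G.m_assoc)
      have "inv h \<otimes> a \<otimes> inv (\<phi> (inv h)) = \<tau> S a'"
        unfolding ae using hc tc phc2 by (simp add: G.m_assoc G.inv_cancel_l')
      moreover have "inv h \<otimes> a \<otimes> inv (\<phi> (inv h)) \<in> A2"
        using N.m_closed[OF N.m_closed[OF N.m_inv_closed[OF h(1)] a(1)] N.m_inv_closed[OF ph]] .
      ultimately have tA: "\<tau> S a' \<in> A2" by simp
      have invc: "inv\<^bsub>G\<lparr>carrier := A2\<rparr>\<^esub> h = inv h"
        by (rule G.m_inv_consistent[OF N.subgroup_axioms h(1)])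
      have "(a, \<tau> S a') \<in> E'"
        unfolding E'_def twisted_rel_def using a(1) tA ae invc
        by (auto intro!: bexI[OF _ hA1])
      then show "\<exists>S\<in>Fx. (a, \<tau> S a') \<in> E'" using SF by blast
    qed
    have "A2 // E' \<subseteq> (\<Union>D\<in>carrier G // E. (\<lambda>S. E' `` {\<tau> S (SOME a'. a' \<in> D \<inter> A2)}) ` Fx)"
    proof
      fix C assume "C \<in> A2 // E'"
      then obtain a where a: "a \<in> A2" "C = E' `` {a}" by (auto elim: quotientE)
      define D where "D = E `` {a}"
      have D: "D \<in> carrier G // E" unfolding D_def using A2c[OF a(1)] by (rule quotientI)
      have "a \<in> D \<inter> A2" unfolding D_def using equiv_class_self[OF eqE A2c[OF a(1)]] a(1) by simp
      then have "(SOME a'. a' \<in> D \<inter> A2) \<in> D \<inter> A2" by (rule someI)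
      then have a2: "(SOME a'. a' \<in> D \<inter> A2) \<in> A2" "(a, SOME a'. a' \<in> D \<inter> A2) \<in> E"
        unfolding D_def by auto
      from C2[OF a(1) a2] obtain S where S: "S \<in> Fx" "(a, \<tau> S (SOME a'. a' \<in> D \<inter> A2)) \<in> E'" by blast
      have "C = E' `` {\<tau> S (SOME a'. a' \<in> D \<inter> A2)}"
        unfolding a(2) using eqE' S(2) by (rule equiv_class_eq)
      then show "C \<in> (\<Union>D\<in>carrier G // E. (\<lambda>S. E' `` {\<tau> S (SOME a'. a' \<in> D \<inter> A2)}) ` Fx)"
        using D S(1) by blast
    qed
    moreover have "finite (\<Union>D\<in>carrier G // E. (\<lambda>S. E' `` {\<tau> S (SOME a'. a' \<in> D \<inter> A2)}) ` Fx)"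
      using fin finF unfolding Fx_def by blast
    ultimately show False using inf finite_subset by blast
  qed
  have part3: "(\<forall>a\<in>A2. \<forall>x\<in>carrier G. a \<otimes> x = x \<otimes> a) \<Longrightarrow>
      carrier G // E \<subseteq> (\<lambda>(Cb, C'). E `` {(SOME g. g \<in> carrier G \<and> p g \<in> Cb) \<otimes> (SOME a. a \<in> C')})
          ` (carrier (G Mod A2) // Eb \<times> A2 // E')"
  proof
    fix C assume cent: "\<forall>a\<in>A2. \<forall>x\<in>carrier G. a \<otimes> x = x \<otimes> a" and "C \<in> carrier G // E"
    then obtain h where h: "h \<in> carrier G" "C = E `` {h}" by (auto elim: quotientE)
    define Cb where "Cb = Eb `` {p h}"
    have Cb: "Cb \<in> carrier (G Mod A2) // Eb" unfolding Cb_def using pcar[OF h(1)] by (rule quotientI)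
    define g where "g = (SOME g. g \<in> carrier G \<and> p g \<in> Cb)"
    have "h \<in> carrier G \<and> p h \<in> Cb"
      using h(1) equiv_class_self[OF eqEb pcar[OF h(1)]] unfolding Cb_def by simp
    then have "g \<in> carrier G \<and> p g \<in> Cb" unfolding g_def by (rule someI)
    then have gc: "g \<in> carrier G" and "(p h, p g) \<in> Eb" unfolding Cb_def by auto
    then obtain \<gamma>b where gb: "\<gamma>b \<in> Q"
      "p h = \<gamma>b \<otimes>\<^bsub>G Mod A2\<^esub> p g \<otimes>\<^bsub>G Mod A2\<^esub> \<phi>bar (inv\<^bsub>G Mod A2\<^esub> \<gamma>b)"
      unfolding Eb_def twisted_rel_def by blast
    then obtain \<gamma> where g: "\<gamma> \<in> B1" "\<gamma>b = p \<gamma>" unfolding Qp by auto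
    have gmc: "\<gamma> \<in> carrier G" using B1c g(1) .
    have phc: "\<phi> (inv \<gamma>) \<in> carrier G" using phic B1inv g(1) by blast
    have "p h = p (\<gamma> \<otimes> g \<otimes> \<phi> (inv \<gamma>))" using gb(2) KL[OF g(1) gc] g(2) by simp
    then have "h \<in> A2 #> (\<gamma> \<otimes> g \<otimes> \<phi> (inv \<gamma>))"
      using G.rcos_self[OF h(1) N.subgroup_axioms] unfolding p_def by simp
    then obtain a0 where a0: "a0 \<in> A2" "h = a0 \<otimes> (\<gamma> \<otimes> g \<otimes> \<phi> (inv \<gamma>))"
      unfolding r_coset_def by auto
    have a0c: "a0 \<in> carrier G" using A2c a0(1) .
    have c1: "a0 \<otimes> \<gamma> = \<gamma> \<otimes> a0" using cent a0(1) gmc by blast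
    have c2: "a0 \<otimes> g = g \<otimes> a0" using cent a0(1) gc by blast
    have "h = (a0 \<otimes> \<gamma>) \<otimes> g \<otimes> \<phi> (inv \<gamma>)" using a0(2) a0c gmc gc phc by (simp add: G.m_assoc)
    also have "\<dots> = (\<gamma> \<otimes> a0) \<otimes> g \<otimes> \<phi> (inv \<gamma>)" by (simp only: c1)
    also have "\<dots> = \<gamma> \<otimes> (a0 \<otimes> g) \<otimes> \<phi> (inv \<gamma>)" using a0c gmc gc phc by (simp add: G.m_assoc)
    also have "\<dots> = \<gamma> \<otimes> (g \<otimes> a0) \<otimes> \<phi> (inv \<gamma>)" by (simp only: c2)
    finally have he: "h = \<gamma> \<otimes> (g \<otimes> a0) \<otimes> \<phi> (inv \<gamma>)" .
    have hE: "(h, g \<otimes> a0) \<in> E" unfolding E_def twisted_rel_def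
      using h(1) gc a0c he g(1) by (auto intro!: bexI[OF _ g(1)])
    define C' where "C' = E' `` {a0}"
    have C': "C' \<in> A2 // E'" unfolding C'_def using a0(1) by (rule quotientI)
    define a' where "a' = (SOME a. a \<in> C')"
    have "a0 \<in> C'" unfolding C'_def by (rule equiv_class_self[OF eqE' a0(1)])
    then have "a' \<in> C'" unfolding a'_def by (rule someI)
    then have "(a0, a') \<in> E'" unfolding C'_def by simp
    then obtain c where c: "a' \<in> A2" "c \<in> A1"
      "a0 = c \<otimes> a' \<otimes> \<phi> (inv\<^bsub>G\<lparr>carrier := A2\<rparr>\<^esub> c)"
      unfolding E'_def twisted_rel_def by auto
    have cA: "c \<in> A2" using A1A c(2) .
    have cc: "c \<in> carrier G" using A2c cA .
    have a'c: "a' \<in> carrier G" using A2c c(1) .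
    have cB: "c \<in> B1" using A1B c(2) .
    have pcc: "\<phi> (inv c) \<in> carrier G" using phic B1inv cB by blast
    have a0e: "a0 = c \<otimes> a' \<otimes> \<phi> (inv c)"
      using c(3) G.m_inv_consistent[OF N.subgroup_axioms cA] by simp
    have c3: "g \<otimes> c = c \<otimes> g" using cent cA gc by metis
    have "g \<otimes> a0 = (g \<otimes> c) \<otimes> a' \<otimes> \<phi> (inv c)" using a0e gc cc a'c pcc by (simp add: G.m_assoc)
    also have "\<dots> = (c \<otimes> g) \<otimes> a' \<otimes> \<phi> (inv c)" by (simp only: c3)
    also have "\<dots> = c \<otimes> (g \<otimes> a') \<otimes> \<phi> (inv c)" using gc cc a'c pcc by (simp add: G.m_assoc)
    finally have ge: "g \<otimes> a0 = c \<otimes> (g \<otimes> a') \<otimes> \<phi> (inv c)" .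
    have "(g \<otimes> a0, g \<otimes> a') \<in> E" unfolding E_def twisted_rel_def
      using gc a0c a'c ge cB cc pcc by auto
    with hE have "(h, g \<otimes> a') \<in> E" by (rule transD[OF trE])
    then have "C = E `` {g \<otimes> a'}" unfolding h(2) by (rule equiv_class_eq[OF eqE])
    then have "C = (\<lambda>(Cb, C'). E `` {(SOME g. g \<in> carrier G \<and> p g \<in> Cb) \<otimes> (SOME a. a \<in> C')}) (Cb, C')"
      unfolding g_def a'_def by simp
    then show "C \<in> (\<lambda>(Cb, C'). E `` {(SOME g. g \<in> carrier G \<and> p g \<in> Cb) \<otimes> (SOME a. a \<in> C')})
          ` (carrier (G Mod A2) // Eb \<times> A2 // E')" using Cb C' by blast
  qed
  have Rv: "reidemeister G B1 \<phi> = (if finite (carrier G // E) then enat (card (carrier G // E)) else \<infinity>)"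
    unfolding reidemeister_def E_def ..
  have Rvb: "reidemeister (G Mod A2) Q \<phi>bar = (if finite (carrier (G Mod A2) // Eb) then enat (card (carrier (G Mod A2) // Eb)) else \<infinity>)"
    unfolding reidemeister_def Eb_def ..
  have Rv': "reidemeister (G\<lparr>carrier := A2\<rparr>) A1 \<phi> = (if finite (A2 // E') then enat (card (A2 // E')) else \<infinity>)"
    unfolding reidemeister_def E'_def by simp
  have nzb: "reidemeister (G Mod A2) Q \<phi>bar \<noteq> 0"
    by (rule reid_nonzero) (use pcar[OF G.one_closed] in blast)
  have nz': "reidemeister (G\<lparr>carrier := A2\<rparr>) A1 \<phi> \<noteq> 0"
  proof (rule reid_nonzero)
    have "\<one> \<in> A2" by (rule subgroup.one_closed[OF N.subgroup_axioms])
    then have "A2 \<noteq> {}" by blast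
    then show "carrier (G\<lparr>carrier := A2\<rparr>) \<noteq> {}" by simp
  qed
  have part3': "(\<forall>a\<in>A2. \<forall>x\<in>carrier G. a \<otimes> x = x \<otimes> a) \<Longrightarrow>
      reidemeister G B1 \<phi> \<le> reidemeister (G Mod A2) Q \<phi>bar * reidemeister (G\<lparr>carrier := A2\<rparr>) A1 \<phi>"
  proof -
    assume cent: "\<forall>a\<in>A2. \<forall>x\<in>carrier G. a \<otimes> x = x \<otimes> a"
    show ?thesis
    proof (cases "finite (carrier (G Mod A2) // Eb) \<and> finite (A2 // E')")
      case True
      let ?f = "\<lambda>(Cb, C'). E `` {(SOME g. g \<in> carrier G \<and> p g \<in> Cb) \<otimes> (SOME a. a \<in> C')}"
      have fp: "finite (carrier (G Mod A2) // Eb \<times> A2 // E')" using True by simp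
      then have fi: "finite (?f ` (carrier (G Mod A2) // Eb \<times> A2 // E'))" by simp
      have sub: "carrier G // E \<subseteq> ?f ` (carrier (G Mod A2) // Eb \<times> A2 // E')" by (rule part3[OF cent])
      have fin: "finite (carrier G // E)" using finite_subset[OF sub fi] .
      have "card (carrier G // E) \<le> card (?f ` (carrier (G Mod A2) // Eb \<times> A2 // E'))"
        by (rule card_mono[OF fi sub])
      also have "\<dots> \<le> card (carrier (G Mod A2) // Eb \<times> A2 // E')" by (rule card_image_le[OF fp])
      also have "\<dots> = card (carrier (G Mod A2) // Eb) * card (A2 // E')" by (rule card_cartesian_product)
      finally show ?thesis unfolding Rv Rvb Rv' using True fin by simp
    next
      case False
      then have "reidemeister (G Mod A2) Q \<phi>bar * reidemeister (G\<lparr>carrier := A2\<rparr>) A1 \<phi> = \<infinity>"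
        using nzb nz' unfolding imult_is_infinity Rvb Rv' by auto
      then show ?thesis by simp
    qed
  qed
  show ?thesis
    using part1 part2 part3' unfolding RE REb RE' by blast
qed


theorem mainTheorem7:
  fixes G :: "('a, 'b) monoid_scheme" and A1 A2 B1 :: "'a set" and \<phi> :: "'a \<Rightarrow> 'a"
  assumes grp: "group G"
    and A2B2: "A2 \<lhd> G"
    and B1sub: "subgroup B1 G"
    and A1sub: "subgroup A1 G"
    and A1A2: "A1 \<subseteq> A2"
    and A1B1: "A1 \<lhd> G\<lparr>carrier := B1\<rparr>"
    and A1eq: "A1 = B1 \<inter> A2"
    and idxA: "finite {A1 #>\<^bsub>G\<^esub> a | a. a \<in> A2}"
    and idxB: "finite {B1 #>\<^bsub>G\<^esub> b | b. b \<in> carrier G}"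
    and hom: "\<phi> \<in> hom (G\<lparr>carrier := B1\<rparr>) G"
    and phiA: "\<phi> ` A1 \<subseteq> A2"
  defines "Q \<equiv> {A2 #>\<^bsub>G\<^esub> b | b. b \<in> B1}"
    and "\<phi>bar \<equiv> induced_map G B1 A2 \<phi>"
  shows "(reidemeister (G Mod A2) Q \<phi>bar = \<infinity> \<longrightarrow> reidemeister G B1 \<phi> = \<infinity>)
       \<and> ((reidemeister (G Mod A2) Q \<phi>bar < \<infinity> \<and> finite {x \<in> Q. \<phi>bar x = x}
            \<and> reidemeister (G\<lparr>carrier := A2\<rparr>) A1 \<phi> = \<infinity>) \<longrightarrow> reidemeister G B1 \<phi> = \<infinity>)
       \<and> ((\<forall>a\<in>A2. \<forall>x\<in>carrier G. a \<otimes>\<^bsub>G\<^esub> x = x \<otimes>\<^bsub>G\<^esub> a) \<longrightarrow>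
            reidemeister G B1 \<phi> \<le> reidemeister (G Mod A2) Q \<phi>bar * reidemeister (G\<lparr>carrier := A2\<rparr>) A1 \<phi>)"
  using main_aux[OF grp A2B2 B1sub A1sub A1A2 A1B1 A1eq idxA idxB hom phiA]
  unfolding Q_def \<phi>bar_def .

end
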